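(* A set $F$ of pairs $(K,a)$ ($K$ a graph, $a\in\mathbb{Z}_2^{*V(K)}$, taken up to isomorphism) is an easy full graph fibration if and only if $F(K)$ is a normal subgroup of $\mathbb{Z}_2^{*V(K)}$ for every graph $K$ and, for every graph homomorphism $\phi\colon H\to K$ between any two graphs, $\phi(F(H))\subset F(K)$.
   Context: Graphs are finite, undirected, without multiple edges, loops allowed, considered up to isomorphism; $N_k$ is the edgeless graph on $k$ vertices. A graph homomorphism is a vertex map sending edges (including loops) to edges. For a set $V$, $\mathbb{Z}_2^{*V}$ is the group generated by $V$ subject to $v^2=e$; a map $\phi\colon V\to V'$ induces a homomorphism $\mathbb{Z}_2^{*V}\to\mathbb{Z}_2^{*V'}$, also denoted $\phi$. Pairs are taken up to the equivalence $(K,a)\equiv(K',\phi(a))$ for isomorphisms $\phi\colon K\to K'$, and $F(K):=\{a\mid (K,a)\in F\}$. For a partition $\pi$ of $V(K)$, the quotient $K/\pi$ has the blocks as vertices with an edge between two (possibly equal) blocks iff $K$ has an edge between some of their elements; $q_\pi\colon V(K)\to V(K/\pi)$ the quotient map. A vertex overlap of graphs $K,H$ is a subset $f\subset V(K)\times V(H)$ in which each vertex occurs at most once; $K\cup_fH$ is the quotient of $K\sqcup H$ identifying $v$ with $w$ for $(v,w)\in f$; $f_K,f_H$ are the induced maps into $V(K\cup_fH)$. A graph fibration is such a set $F$ with $(N_0,e),(N_1,e)\in F$ and: (F1) each $F(K)$ is empty or a normal subgroup; (F2) $\phi(F(K))=F(K)$ for every automorphism $\phi$ of $K$; (F3) if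 $(K,a),(H,b)\in F$ and $f$ is a vertex overlap, then $(K\cup_fH,f_K(a)f_H(b))\in F$. It is full if $F(K)\ne\emptyset$ for all graphs $K$, and easy if (F4): for $F(K)\neq\emptyset$ and every partition $\pi$ of $V(K)$, $q_\pi(F(K))\subset F(K/\pi)$. *)

theory Defs
  imports "HOL-Algebra.Coset"
begin

text \<open>A graph is a pair (V, E) with vertices drawn from nat; E is a symmetric relation
on V, i.e. an undirected edge set without multiple edges; loops (v,v) are allowed.
Graphs are considered up to isomorphism: every finite graph has such a representative.\<close>

type_synonym graph = "nat set \<times> (nat \<times> nat) set"

definition wf_graph :: "graph \<Rightarrow> bool" where
  "wf_graph G \<longleftrightarrow> finite (fst G) \<and> snd G \<subseteq> fst G \<times> fst G \<and> sym (snd G)"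

definition edge_image :: "(nat \<Rightarrow> nat) \<Rightarrow> (nat \<times> nat) set \<Rightarrow> (nat \<times> nat) set" where
  "edge_image \<phi> E = (\<lambda>(u,v). (\<phi> u, \<phi> v)) ` E"

definition graph_hom :: "(nat \<Rightarrow> nat) \<Rightarrow> graph \<Rightarrow> graph \<Rightarrow> bool" where
  "graph_hom \<phi> H K \<longleftrightarrow> \<phi> ` fst H \<subseteq> fst K \<and> edge_image \<phi> (snd H) \<subseteq> snd K"

definition graph_iso :: "(nat \<Rightarrow> nat) \<Rightarrow> graph \<Rightarrow> graph \<Rightarrow> bool" where
  "graph_iso \<phi> H K \<longleftrightarrow> bij_betw \<phi> (fst H) (fst K) \<and> edge_image \<phi> (snd H) = snd K"

definition edgeless :: "nat set \<Rightarrow> graph" where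
  "edgeless V = (V, {})"

fun red :: "nat list \<Rightarrow> nat list" where
  "red [] = []"
| "red (x # xs) = (case red xs of [] \<Rightarrow> [x] | y # ys \<Rightarrow> (if x = y then ys else x # y # ys))"

definition reduced :: "nat list \<Rightarrow> bool" where
  "reduced w \<longleftrightarrow> successively (\<noteq>) w"

text \<open>Z_2^{*V}: generated by V subject to v^2 = e; elements are reduced words,
product is concatenation followed by cancellation, identity is the empty word.\<close>

definition Z2free :: "nat set \<Rightarrow> nat list monoid" where
  "Z2free V = \<lparr>carrier = {w. set w \<subseteq> V \<and> reduced w}, mult = (\<lambda>a b. red (a @ b)), one = []\<rparr>"

definition mapw :: "(nat \<Rightarrow> nat) \<Rightarrow> nat list \<Rightarrow> nat list" where
  "mapw \<phi> a = red (map \<phi> a)"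

definition Fof :: "(graph \<times> nat list) set \<Rightarrow> graph \<Rightarrow> nat list set" where
  "Fof F K = {a. (K, a) \<in> F}"

text \<open>Standing conventions: F consists of pairs (K,a) with K a graph and a in Z_2^{*V(K)},
and F is closed under the equivalence (K,a) == (K', phi(a)) for isomorphisms phi.\<close>
definition valid_pairs :: "(graph \<times> nat list) set \<Rightarrow> bool" where
  "valid_pairs F \<longleftrightarrow> (\<forall>K a. (K, a) \<in> F \<longrightarrow> wf_graph K \<and> a \<in> carrier (Z2free (fst K)))"

definition iso_closed :: "(graph \<times> nat list) set \<Rightarrow> bool" where
  "iso_closed F \<longleftrightarrow> (\<forall>K K' \<phi> a. (K, a) \<in> F \<longrightarrow> wf_graph K' \<longrightarrow> graph_iso \<phi> K K'
      \<longrightarrow> (K', mapw \<phi> a) \<in> F)"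

definition vertex_overlap :: "(nat \<times> nat) set \<Rightarrow> graph \<Rightarrow> graph \<Rightarrow> bool" where
  "vertex_overlap f K H \<longleftrightarrow> f \<subseteq> fst K \<times> fst H \<and>
     (\<forall>v w v' w'. (v, w) \<in> f \<longrightarrow> (v', w') \<in> f \<longrightarrow> (v = v' \<longleftrightarrow> w = w'))"

text \<open>G together with fK, fH realises (up to isomorphism) the glued graph K \<union>_f H
with its induced vertex maps: G is the quotient of the disjoint union of K and H
identifying v with w exactly for (v,w) in f.\<close>
definition is_gluing :: "graph \<Rightarrow> graph \<Rightarrow> (nat \<times> nat) set \<Rightarrow> graph
    \<Rightarrow> (nat \<Rightarrow> nat) \<Rightarrow> (nat \<Rightarrow> nat) \<Rightarrow> bool" where
  "is_gluing K H f G fK fH \<longleftrightarrow>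
     inj_on fK (fst K) \<and> inj_on fH (fst H) \<and>
     fst G = fK ` fst K \<union> fH ` fst H \<and>
     snd G = edge_image fK (snd K) \<union> edge_image fH (snd H) \<and>
     (\<forall>v\<in>fst K. \<forall>w\<in>fst H. fK v = fH w \<longleftrightarrow> (v, w) \<in> f)"

text \<open>G together with q realises (up to isomorphism) the quotient K/pi with quotient map
q_pi, where pi is the partition of V(K) into the fibres of q.\<close>
definition is_quotient :: "graph \<Rightarrow> graph \<Rightarrow> (nat \<Rightarrow> nat) \<Rightarrow> bool" where
  "is_quotient K G q \<longleftrightarrow> q ` fst K = fst G \<and> snd G = edge_image q (snd K)"

definition graph_fibration :: "(graph \<times> nat list) set \<Rightarrow> bool" where
  "graph_fibration F \<longleftrightarrow>
     (edgeless {}, []) \<in> F \<and> (edgeless {0}, []) \<in> F \<and>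
     (\<forall>K. wf_graph K \<longrightarrow> Fof F K = {} \<or> Fof F K \<lhd> Z2free (fst K)) \<and>
     (\<forall>K \<phi>. wf_graph K \<longrightarrow> graph_iso \<phi> K K \<longrightarrow> mapw \<phi> ` Fof F K = Fof F K) \<and>
     (\<forall>K H a b f G fK fH. (K, a) \<in> F \<longrightarrow> (H, b) \<in> F \<longrightarrow> vertex_overlap f K H \<longrightarrow>
        wf_graph G \<longrightarrow> is_gluing K H f G fK fH \<longrightarrow>
        (G, mapw fK a \<otimes>\<^bsub>Z2free (fst G)\<^esub> mapw fH b) \<in> F)"

definition full_fibration :: "(graph \<times> nat list) set \<Rightarrow> bool" where
  "full_fibration F \<longleftrightarrow> graph_fibration F \<and> (\<forall>K. wf_graph K \<longrightarrow> Fof F K \<noteq> {})"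

definition easy_fibration :: "(graph \<times> nat list) set \<Rightarrow> bool" where
  "easy_fibration F \<longleftrightarrow> graph_fibration F \<and>
     (\<forall>K G q. wf_graph K \<longrightarrow> Fof F K \<noteq> {} \<longrightarrow> wf_graph G \<longrightarrow> is_quotient K G q \<longrightarrow>
        mapw q ` Fof F K \<subseteq> Fof F G)"

end

theory Submission
  imports Defs
begin

lemma reduced_Cons: "reduced (x # xs) \<longleftrightarrow> (reduced xs \<and> (xs = [] \<or> x \<noteq> hd xs))"
  unfolding reduced_def by (cases xs) auto

lemma red_reduced: "reduced (red w)"
proof (induction w)
  case Nil then show ?case by (simp add: reduced_def)
next
  case (Cons x xs)
  then show ?case
    by (auto split: list.splits simp: reduced_Cons)
qed

lemma red_id: "reduced w \<Longrightarrow> red w = w"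
proof (induction w)
  case Nil then show ?case by simp
next
  case (Cons x xs)
  then show ?case by (cases xs) (auto simp: reduced_Cons)
qed

lemma red_red[simp]: "red (red w) = red w"
  by (rule red_id[OF red_reduced])

lemma red_cons_red: "red (x # red w) = red (x # w)"
  by simp

lemma red_cons_cons: "red (a # a # w) = red w"
proof (cases "red w")
  case Nil then show ?thesis by simp
next
  case (Cons z zs)
  have r: "reduced (z # zs)" using red_reduced[of w] Cons by simp
  show ?thesis
  proof (cases "a = z")
    case True
    then show ?thesis using Cons r
      by (cases zs) (auto simp: reduced_Cons)
  next
    case False
    then show ?thesis using Cons by simp
  qed
qed

lemma red_map_red: "red (map \<phi> (red w)) = red (map \<phi> w)"
proof (induction w)
  case Nil then show ?case by simp
next
  case (Cons x xs)
  have step: "red (map \<phi> (red (x # xs))) = red (map \<phi> (x # red xs))"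
  proof (cases "red xs")
    case Nil then show ?thesis by simp
  next
    case (Cons y ys)
    show ?thesis
    proof (cases "x = y")
      case True
      have "red (x # xs) = ys" using Cons True by simp
      then have "red (map \<phi> (red (x # xs))) = red (map \<phi> ys)" by (simp only:)
      also have "\<dots> = red (\<phi> y # \<phi> y # map \<phi> ys)" by (rule red_cons_cons[symmetric])
      also have "\<dots> = red (map \<phi> (x # red xs))" unfolding Cons True by (simp only: list.map)
      finally show ?thesis .
    next
      case False
      have "red (x # xs) = x # y # ys" using Cons False by simp
      then show ?thesis using Cons by simp
    qed
  qed
  have "red (map \<phi> (x # red xs)) = red (\<phi> x # red (map \<phi> (red xs)))"
    by simp
  also have "\<dots> = red (\<phi> x # red (map \<phi> xs))" using Cons.IH by simp
  also have "\<dots> = red (map \<phi> (x # xs))" by simp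
  finally show ?case using step by simp
qed

lemma normal_one: "N \<lhd> Z2free V \<Longrightarrow> [] \<in> N"
  using subgroup.one_closed[of N "Z2free V"] normal_imp_subgroup
  by (fastforce simp: Z2free_def)

lemma normal_mult: "N \<lhd> Z2free V \<Longrightarrow> a \<in> N \<Longrightarrow> b \<in> N \<Longrightarrow> red (a @ b) \<in> N"
  using subgroup.m_closed[of N "Z2free V" a b] normal_imp_subgroup
  by (fastforce simp: Z2free_def)

lemma edge_image_id[simp]: "edge_image id E = E"
  by (auto simp: edge_image_def)

theorem proposition2p18:
  fixes F :: "(graph \<times> nat list) set"
  assumes "valid_pairs F" and "iso_closed F"
  shows "(easy_fibration F \<and> full_fibration F) \<longleftrightarrow>
    ((\<forall>K. wf_graph K \<longrightarrow> Fof F K \<lhd> Z2free (fst K)) \<and>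
     (\<forall>H K \<phi>. wf_graph H \<longrightarrow> wf_graph K \<longrightarrow> graph_hom \<phi> H K \<longrightarrow>
        mapw \<phi> ` Fof F H \<subseteq> Fof F K))"
proof
  assume A: "easy_fibration F \<and> full_fibration F"
  have gf: "graph_fibration F" using A unfolding full_fibration_def by (elim conjE)
  have fullK: "\<forall>K. wf_graph K \<longrightarrow> Fof F K \<noteq> {}" using A unfolding full_fibration_def by (elim conjE)
  have full: "\<And>K. wf_graph K \<Longrightarrow> Fof F K \<noteq> {}" using fullK by (rule allE) (erule mp)
  have easy: "\<And>K G q. wf_graph K \<Longrightarrow> Fof F K \<noteq> {} \<Longrightarrow> wf_graph G \<Longrightarrow> is_quotient K G q \<Longrightarrow>
        mapw q ` Fof F K \<subseteq> Fof F G"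
    using A unfolding easy_fibration_def by blast
  have nrm: "\<And>K. wf_graph K \<Longrightarrow> Fof F K \<lhd> Z2free (fst K)"
  proof -
    fix K :: graph assume wK: "wf_graph K"
    have "\<forall>K. wf_graph K \<longrightarrow> Fof F K = {} \<or> Fof F K \<lhd> Z2free (fst K)"
      using gf unfolding graph_fibration_def by (elim conjE)
    then have "Fof F K = {} \<or> Fof F K \<lhd> Z2free (fst K)" using wK by blast
    then show "Fof F K \<lhd> Z2free (fst K)" using full[OF wK] by blast
  qed
  have glue: "\<And>K H a b f G fK fH. (K, a) \<in> F \<Longrightarrow> (H, b) \<in> F \<Longrightarrow> vertex_overlap f K H \<Longrightarrow>
        wf_graph G \<Longrightarrow> is_gluing K H f G fK fH \<Longrightarrow>
        (G, mapw fK a \<otimes>\<^bsub>Z2free (fst G)\<^esub> mapw fH b) \<in> F"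
  proof -
    have "\<forall>K H a b f G fK fH. (K, a) \<in> F \<longrightarrow> (H, b) \<in> F \<longrightarrow> vertex_overlap f K H \<longrightarrow>
        wf_graph G \<longrightarrow> is_gluing K H f G fK fH \<longrightarrow>
        (G, mapw fK a \<otimes>\<^bsub>Z2free (fst G)\<^esub> mapw fH b) \<in> F"
      using gf unfolding graph_fibration_def by (elim conjE)
    then show "\<And>K H a b f G fK fH. (K, a) \<in> F \<Longrightarrow> (H, b) \<in> F \<Longrightarrow> vertex_overlap f K H \<Longrightarrow>
        wf_graph G \<Longrightarrow> is_gluing K H f G fK fH \<Longrightarrow>
        (G, mapw fK a \<otimes>\<^bsub>Z2free (fst G)\<^esub> mapw fH b) \<in> F" by blast
  qed
  show "(\<forall>K. wf_graph K \<longrightarrow> Fof F K \<lhd> Z2free (fst K)) \<and>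
     (\<forall>H K \<phi>. wf_graph H \<longrightarrow> wf_graph K \<longrightarrow> graph_hom \<phi> H K \<longrightarrow>
        mapw \<phi> ` Fof F H \<subseteq> Fof F K)"
  proof (intro conjI allI impI)
    fix K :: graph assume "wf_graph K" then show "Fof F K \<lhd> Z2free (fst K)" by (rule nrm)
  next
    fix H K :: graph and \<phi>
    assume wH: "wf_graph H" and wK: "wf_graph K" and hom: "graph_hom \<phi> H K"
    define G :: graph where "G = (\<phi> ` fst H, edge_image \<phi> (snd H))"
    have wG: "wf_graph G"
    proof -
      have "finite (fst G)" using wH by (simp add: G_def wf_graph_def)
      moreover have "snd G \<subseteq> fst G \<times> fst G"
        using wH by (auto simp: G_def wf_graph_def edge_image_def)
      moreover have "sym (snd G)"
        using wH unfolding G_def wf_graph_def edge_image_def sym_def by auto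
      ultimately show ?thesis by (simp add: wf_graph_def)
    qed
    have q: "is_quotient H G \<phi>" by (simp add: is_quotient_def G_def)
    have sub: "mapw \<phi> ` Fof F H \<subseteq> Fof F G" using easy[OF wH full[OF wH] wG q] .
    have GK1: "fst G \<subseteq> fst K" and GK2: "snd G \<subseteq> snd K"
      using hom by (auto simp: G_def graph_hom_def)
    have eK: "(K, []) \<in> F" using normal_one[OF nrm[OF wK]] by (simp add: Fof_def)
    show "mapw \<phi> ` Fof F H \<subseteq> Fof F K"
    proof
      fix c assume "c \<in> mapw \<phi> ` Fof F H"
      then obtain a where a: "a \<in> Fof F H" and c: "c = mapw \<phi> a" by auto
      have cG: "(G, c) \<in> F" using sub a c by (auto simp: Fof_def)
      have vo: "vertex_overlap (Id_on (fst G)) G K"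
        using GK1 by (auto simp: vertex_overlap_def)
      have ig: "is_gluing G K (Id_on (fst G)) K id id"
        using GK1 GK2 by (auto simp: is_gluing_def)
      have "(K, mapw id c \<otimes>\<^bsub>Z2free (fst K)\<^esub> mapw id []) \<in> F"
        by (rule glue[OF cG eK vo wK ig])
      moreover have "mapw id c \<otimes>\<^bsub>Z2free (fst K)\<^esub> mapw id [] = c"
        by (simp add: Z2free_def mapw_def c)
      ultimately show "c \<in> Fof F K" by (simp add: Fof_def)
    qed
  qed
next
  assume B: "(\<forall>K. wf_graph K \<longrightarrow> Fof F K \<lhd> Z2free (fst K)) \<and>
     (\<forall>H K \<phi>. wf_graph H \<longrightarrow> wf_graph K \<longrightarrow> graph_hom \<phi> H K \<longrightarrow>
        mapw \<phi> ` Fof F H \<subseteq> Fof F K)"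
  then have nrm: "\<And>K. wf_graph K \<Longrightarrow> Fof F K \<lhd> Z2free (fst K)"
    and hm: "\<And>H K \<phi>. wf_graph H \<Longrightarrow> wf_graph K \<Longrightarrow> graph_hom \<phi> H K \<Longrightarrow>
        mapw \<phi> ` Fof F H \<subseteq> Fof F K" by blast+
  have e0: "(edgeless {}, []) \<in> F"
    using normal_one[OF nrm[of "edgeless {}"]] by (simp add: Fof_def wf_graph_def edgeless_def)
  have e1: "(edgeless {0}, []) \<in> F"
    using normal_one[OF nrm[of "edgeless {0}"]] by (simp add: Fof_def wf_graph_def edgeless_def)
  have F2: "mapw \<phi> ` Fof F K = Fof F K" if wK: "wf_graph K" and iso: "graph_iso \<phi> K K" for K \<phi>
  proof
    have bij: "bij_betw \<phi> (fst K) (fst K)" and ed: "edge_image \<phi> (snd K) = snd K"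
      using iso by (auto simp: graph_iso_def)
    have h1: "graph_hom \<phi> K K" using bij_betw_imp_surj_on[OF bij] ed
      by (simp add: graph_hom_def)
    show "mapw \<phi> ` Fof F K \<subseteq> Fof F K" using hm[OF wK wK h1] .
    define \<psi> where "\<psi> = inv_into (fst K) \<phi>"
    have inv1: "\<And>u. u \<in> fst K \<Longrightarrow> \<psi> (\<phi> u) = u"
      using bij by (simp add: \<psi>_def bij_betw_imp_inj_on inv_into_f_f)
    have inv2: "\<And>u. u \<in> fst K \<Longrightarrow> \<phi> (\<psi> u) = u"
      using bij by (simp add: \<psi>_def bij_betw_imp_surj_on f_inv_into_f)
    have inv3: "\<And>u. u \<in> fst K \<Longrightarrow> \<psi> u \<in> fst K"
      using bij by (simp add: \<psi>_def bij_betw_imp_surj_on inv_into_into)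
    have EK: "snd K \<subseteq> fst K \<times> fst K" using wK by (simp add: wf_graph_def)
    have h2: "graph_hom \<psi> K K"
      unfolding graph_hom_def
    proof
      show "\<psi> ` fst K \<subseteq> fst K" using inv3 by auto
      show "edge_image \<psi> (snd K) \<subseteq> snd K"
      proof
        fix e assume "e \<in> edge_image \<psi> (snd K)"
        then obtain u v where uv: "(u, v) \<in> snd K" and e: "e = (\<psi> u, \<psi> v)"
          by (auto simp: edge_image_def)
        have "(u, v) \<in> edge_image \<phi> (snd K)" using uv ed by simp
        then obtain u' v' where uv': "(u', v') \<in> snd K" "u = \<phi> u'" "v = \<phi> v'"
          unfolding edge_image_def by (auto elim!: imageE)
        have "u' \<in> fst K" "v' \<in> fst K" using uv' EK by auto
        then show "e \<in> snd K" using e uv' inv1 by simp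
      qed
    qed
    show "Fof F K \<subseteq> mapw \<phi> ` Fof F K"
    proof
      fix a assume a: "a \<in> Fof F K"
      have b: "mapw \<psi> a \<in> Fof F K" using hm[OF wK wK h2] a by auto
      have "a \<in> carrier (Z2free (fst K))"
        using assms(1) a unfolding valid_pairs_def Fof_def by blast
      then have aK: "set a \<subseteq> fst K" "reduced a" by (simp_all add: Z2free_def)
      have "mapw \<phi> (mapw \<psi> a) = red (map (\<phi> \<circ> \<psi>) a)"
        by (simp add: mapw_def red_map_red)
      also have "map (\<phi> \<circ> \<psi>) a = a"
        using aK(1) inv2 by (induction a) auto
      finally have "mapw \<phi> (mapw \<psi> a) = a" using red_id[OF aK(2)] by simp
      then show "a \<in> mapw \<phi> ` Fof F K" using b by force
    qed
  qed
  have F3: "(G, mapw fK a \<otimes>\<^bsub>Z2free (fst G)\<^esub> mapw fH b) \<in> F"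
    if a: "(K, a) \<in> F" and b: "(H, b) \<in> F" and wG: "wf_graph G"
      and gl: "is_gluing K H f G fK fH" for K H a b f G fK fH
  proof -
    have wK: "wf_graph K" and wH: "wf_graph H"
      using assms(1) a b unfolding valid_pairs_def by blast+
    have hK: "graph_hom fK K G" and hH: "graph_hom fH H G"
      using gl by (auto simp: is_gluing_def graph_hom_def)
    have "mapw fK a \<in> Fof F G" using hm[OF wK wG hK] a by (auto simp: Fof_def)
    moreover have "mapw fH b \<in> Fof F G" using hm[OF wH wG hH] b by (auto simp: Fof_def)
    ultimately have "red (mapw fK a @ mapw fH b) \<in> Fof F G"
      using normal_mult[OF nrm[OF wG]] by blast
    then show ?thesis by (simp add: Fof_def Z2free_def)
  qed
  have gf: "graph_fibration F"
    unfolding graph_fibration_def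
  proof (intro conjI allI impI)
    show "(edgeless {}, []) \<in> F" by (rule e0)
    show "(edgeless {0}, []) \<in> F" by (rule e1)
    fix K :: graph assume "wf_graph K"
    then show "Fof F K = {} \<or> Fof F K \<lhd> Z2free (fst K)" using nrm by blast
  next
    fix K :: graph and \<phi> assume "wf_graph K" "graph_iso \<phi> K K"
    then show "mapw \<phi> ` Fof F K = Fof F K" by (rule F2)
  next
    fix K H a b f G fK fH
    assume "(K, a) \<in> F" "(H, b) \<in> F" "vertex_overlap f K H" "wf_graph G" "is_gluing K H f G fK fH"
    then show "(G, mapw fK a \<otimes>\<^bsub>Z2free (fst G)\<^esub> mapw fH b) \<in> F"
      using F3 by blast
  qed
  have full: "full_fibration F"
    unfolding full_fibration_def
  proof (intro conjI allI impI gf)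
    fix K :: graph assume "wf_graph K"
    then have "[] \<in> Fof F K" using nrm normal_one by blast
    then show "Fof F K \<noteq> {}" by blast
  qed
  have easy: "easy_fibration F"
    unfolding easy_fibration_def
  proof (intro conjI gf allI impI)
    fix K G q assume "wf_graph K" "Fof F K \<noteq> {}" "wf_graph G" "is_quotient K G q"
    moreover have "graph_hom q K G" using \<open>is_quotient K G q\<close>
      by (simp add: is_quotient_def graph_hom_def)
    ultimately show "mapw q ` Fof F K \<subseteq> Fof F G" using hm by blast
  qed
  show "easy_fibration F \<and> full_fibration F" using easy full by blast
qed

end
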